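(* Let $X$ be a non-empty compact ultrametric space with a finite similarity structure $\mathrm{Sim}_X$ such that there are only finitely many $\mathrm{Sim}_X$-equivalence classes of balls. Then for every $n\in\mathbb N$ the sub-level complex $K_{\le n}$ is locally finite.
   Context: A *ball* in $X$ is a closed metric ball of positive radius. A *finite similarity structure* $\mathrm{Sim}_X$ assigns to each ordered pair of balls $B_1,B_2$ a finite (possibly empty) set $\mathrm{Sim}_X(B_1,B_2)$ of surjective similarities $B_1\to B_2$, closed under identities, inverses, compositions, and restrictions to sub-balls. Balls $A,B$ are *$\mathrm{Sim}_X$-equivalent* if $\mathrm{Sim}_X(A,B)\neq\emptyset$. An embedding $h:B\to X$ ($B$ a ball) is *locally determined by* $\mathrm{Sim}_X$ if every $x\in B$ lies in a ball $B'\subseteq B$ with $h(B')$ a ball and $h|_{B'}\in\mathrm{Sim}_X(B',h(B'))$. Let $\mathcal S$ be the set of pairs $(f,B)$ with $B$ a ball and $f:B\to X$ an embedding locally determined by $\mathrm{Sim}_X$; $(f_1,B_1)\sim(f_2,B_2)$ iff $f_2h=f_1$ for some $h\in\mathrm{Sim}_X(B_1,B_2)$; $[f,B]$ is the class. A *vertex of height $k$* is a set $v=\{[f_1,B_1],\dots,[f_k,B_k]\}$ of $k$ classes with $f_1(B_1),\dots,f_k(B_k)$ pairwise disjoint and with union $X$. If $[f,B]\in v$ and $B$ has more than one point, the *simple expansion of $v$ at $[f,B]$* replaces $[f,B]$ by the classes $[f|_A,A]$, $A$ ranging over the maximal proper sub-balls of $B$; write $u\nearrow v$ if $v$ is a simple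 expansion of $u$. $v\le w$ means there is a chain $v=v_1\nearrow\cdots\nearrow v_n=w$ ($n\ge1$). The *similarity complex* $K$ has these vertices and $n$-simplices the chains $v_0<\dots<v_n$. $K_{\le n}$ is the full subcomplex of $K$ spanned by vertices of height $\le n$. *)

theory Defs
  imports "HOL-Analysis.Analysis" "HOL-Library.FuncSet"
begin

text \<open>The space X is a subset of a metric space type, with the induced metric.\<close>

definition ultrametric :: "'a::metric_space set \<Rightarrow> bool" where
  "ultrametric X \<longleftrightarrow>
     (\<forall>x\<in>X. \<forall>y\<in>X. \<forall>z\<in>X. dist x z \<le> max (dist x y) (dist y z))"

definition is_ball :: "'a::metric_space set \<Rightarrow> 'a set \<Rightarrow> bool" where
  "is_ball X B \<longleftrightarrow> (\<exists>x\<in>X. \<exists>r>0. B = {y\<in>X. dist x y \<le> r})"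

definition similarity :: "'a::metric_space set \<Rightarrow> 'a set \<Rightarrow> ('a \<Rightarrow> 'a) \<Rightarrow> bool" where
  "similarity B1 B2 f \<longleftrightarrow> f \<in> extensional B1 \<and> f ` B1 = B2 \<and>
     (\<exists>l>0. \<forall>x\<in>B1. \<forall>y\<in>B1. dist (f x) (f y) = l * dist x y)"

definition finite_sim_structure ::
  "'a::metric_space set \<Rightarrow> ('a set \<Rightarrow> 'a set \<Rightarrow> ('a \<Rightarrow> 'a) set) \<Rightarrow> bool" where
  "finite_sim_structure X Sim \<longleftrightarrow>
     (\<forall>B1 B2. \<not> (is_ball X B1 \<and> is_ball X B2) \<longrightarrow> Sim B1 B2 = {}) \<and>
     (\<forall>B1 B2. finite (Sim B1 B2) \<and> (\<forall>f\<in>Sim B1 B2. similarity B1 B2 f)) \<and>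
     (\<forall>B. is_ball X B \<longrightarrow> restrict id B \<in> Sim B B) \<and>
     (\<forall>B1 B2 f. f \<in> Sim B1 B2 \<longrightarrow> restrict (inv_into B1 f) B2 \<in> Sim B2 B1) \<and>
     (\<forall>B1 B2 B3 f g. f \<in> Sim B1 B2 \<longrightarrow> g \<in> Sim B2 B3 \<longrightarrow> compose B1 g f \<in> Sim B1 B3) \<and>
     (\<forall>B1 B2 f A. f \<in> Sim B1 B2 \<longrightarrow> is_ball X A \<longrightarrow> A \<subseteq> B1 \<longrightarrow>
         restrict f A \<in> Sim A (f ` A))"

definition sim_equiv_rel :: "'a::metric_space set \<Rightarrow> ('a set \<Rightarrow> 'a set \<Rightarrow> ('a \<Rightarrow> 'a) set) \<Rightarrow> ('a set \<times> 'a set) set" where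
  "sim_equiv_rel X Sim = {(A, B). is_ball X A \<and> is_ball X B \<and> Sim A B \<noteq> {}}"

definition finitely_many_ball_classes ::
  "'a::metric_space set \<Rightarrow> ('a set \<Rightarrow> 'a set \<Rightarrow> ('a \<Rightarrow> 'a) set) \<Rightarrow> bool" where
  "finitely_many_ball_classes X Sim \<longleftrightarrow>
     finite ({B. is_ball X B} // sim_equiv_rel X Sim)"

definition embedding_into :: "'a::metric_space set \<Rightarrow> 'a set \<Rightarrow> ('a \<Rightarrow> 'a) \<Rightarrow> bool" where
  "embedding_into X B h \<longleftrightarrow> inj_on h B \<and> h ` B \<subseteq> X \<and> continuous_on B h \<and>
     continuous_on (h ` B) (inv_into B h)"

definition locally_determined ::
  "'a::metric_space set \<Rightarrow> ('a set \<Rightarrow> 'a set \<Rightarrow> ('a \<Rightarrow> 'a) set) \<Rightarrow> 'a set \<Rightarrow> ('a \<Rightarrow> 'a) \<Rightarrow> bool" where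
  "locally_determined X Sim B h \<longleftrightarrow>
     (\<forall>x\<in>B. \<exists>B'. is_ball X B' \<and> B' \<subseteq> B \<and> x \<in> B' \<and> is_ball X (h ` B') \<and>
        restrict h B' \<in> Sim B' (h ` B'))"

definition pairsS ::
  "'a::metric_space set \<Rightarrow> ('a set \<Rightarrow> 'a set \<Rightarrow> ('a \<Rightarrow> 'a) set) \<Rightarrow> (('a \<Rightarrow> 'a) \<times> 'a set) set" where
  "pairsS X Sim = {(f, B). is_ball X B \<and> f \<in> extensional B \<and> embedding_into X B f \<and>
                      locally_determined X Sim B f}"

definition pair_rel ::
  "'a::metric_space set \<Rightarrow> ('a set \<Rightarrow> 'a set \<Rightarrow> ('a \<Rightarrow> 'a) set) \<Rightarrow>
   ((('a \<Rightarrow> 'a) \<times> 'a set) \<times> (('a \<Rightarrow> 'a) \<times> 'a set)) set" where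
  "pair_rel X Sim = {((f1, B1), (f2, B2)). (f1, B1) \<in> pairsS X Sim \<and> (f2, B2) \<in> pairsS X Sim \<and>
       (\<exists>h\<in>Sim B1 B2. \<forall>x\<in>B1. f2 (h x) = f1 x)}"

definition pair_classes ::
  "'a::metric_space set \<Rightarrow> ('a set \<Rightarrow> 'a set \<Rightarrow> ('a \<Rightarrow> 'a) set) \<Rightarrow> (('a \<Rightarrow> 'a) \<times> 'a set) set set" where
  "pair_classes X Sim = pairsS X Sim // pair_rel X Sim"

text \<open>Image f(B) of a class [f,B] (independent of the representative).\<close>
definition class_image :: "(('a \<Rightarrow> 'a) \<times> 'a set) set \<Rightarrow> 'a set" where
  "class_image c = (\<Union>(f, B)\<in>c. f ` B)"

text \<open>Vertices; the height of a vertex v is card v.\<close>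
definition is_vertex ::
  "'a::metric_space set \<Rightarrow> ('a set \<Rightarrow> 'a set \<Rightarrow> ('a \<Rightarrow> 'a) set) \<Rightarrow>
   (('a \<Rightarrow> 'a) \<times> 'a set) set set \<Rightarrow> bool" where
  "is_vertex X Sim v \<longleftrightarrow> finite v \<and> v \<subseteq> pair_classes X Sim \<and>
     (\<forall>c\<in>v. \<forall>d\<in>v. c \<noteq> d \<longrightarrow> class_image c \<inter> class_image d = {}) \<and>
     (\<Union>c\<in>v. class_image c) = X"

definition max_proper_subball :: "'a::metric_space set \<Rightarrow> 'a set \<Rightarrow> 'a set \<Rightarrow> bool" where
  "max_proper_subball X A B \<longleftrightarrow> is_ball X A \<and> A \<subset> B \<and>
     \<not> (\<exists>A'. is_ball X A' \<and> A \<subset> A' \<and> A' \<subset> B)"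

definition simple_expansion ::
  "'a::metric_space set \<Rightarrow> ('a set \<Rightarrow> 'a set \<Rightarrow> ('a \<Rightarrow> 'a) set) \<Rightarrow>
   (('a \<Rightarrow> 'a) \<times> 'a set) set set \<Rightarrow> (('a \<Rightarrow> 'a) \<times> 'a set) set set \<Rightarrow> bool" where
  "simple_expansion X Sim u v \<longleftrightarrow> is_vertex X Sim u \<and> is_vertex X Sim v \<and>
     (\<exists>c\<in>u. \<exists>f B. (f, B) \<in> c \<and> (\<exists>x\<in>B. \<exists>y\<in>B. x \<noteq> y) \<and>
        v = (u - {c}) \<union> {pair_rel X Sim `` {(restrict f A, A)} | A. max_proper_subball X A B})"

text \<open>v \<le> w: chain of simple expansions of length n \<ge> 1 (n = 1 means v = w).\<close>
definition vertex_le ::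
  "'a::metric_space set \<Rightarrow> ('a set \<Rightarrow> 'a set \<Rightarrow> ('a \<Rightarrow> 'a) set) \<Rightarrow>
   (('a \<Rightarrow> 'a) \<times> 'a set) set set \<Rightarrow> (('a \<Rightarrow> 'a) \<times> 'a set) set set \<Rightarrow> bool" where
  "vertex_le X Sim v w \<longleftrightarrow> is_vertex X Sim v \<and> (simple_expansion X Sim)\<^sup>*\<^sup>* v w"

text \<open>Simplices of K_{\<le>n}: finite nonempty chains (totally ordered sets w.r.t. \<le>)
  of vertices of height \<le> n; a chain v0 < ... < vm is identified with its set of vertices.\<close>
definition simplices_le ::
  "'a::metric_space set \<Rightarrow> ('a set \<Rightarrow> 'a set \<Rightarrow> ('a \<Rightarrow> 'a) set) \<Rightarrow> nat \<Rightarrow>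
   (('a \<Rightarrow> 'a) \<times> 'a set) set set set set" where
  "simplices_le X Sim n = {\<sigma>. finite \<sigma> \<and> \<sigma> \<noteq> {} \<and>
     (\<forall>v\<in>\<sigma>. is_vertex X Sim v \<and> card v \<le> n) \<and>
     (\<forall>v\<in>\<sigma>. \<forall>w\<in>\<sigma>. vertex_le X Sim v w \<or> vertex_le X Sim w v)}"

definition K_le_locally_finite ::
  "'a::metric_space set \<Rightarrow> ('a set \<Rightarrow> 'a set \<Rightarrow> ('a \<Rightarrow> 'a) set) \<Rightarrow> nat \<Rightarrow> bool" where
  "K_le_locally_finite X Sim n \<longleftrightarrow>
     (\<forall>v. is_vertex X Sim v \<and> card v \<le> n \<longrightarrow> finite {\<sigma>\<in>simplices_le X Sim n. v \<in> \<sigma>})"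

end

theory Submission
  imports Defs
begin

definition NN :: "'a::metric_space set \<Rightarrow> ('a set \<Rightarrow> 'a set \<Rightarrow> ('a \<Rightarrow> 'a) set) \<Rightarrow> ('a \<Rightarrow> 'a) \<Rightarrow> 'a set \<Rightarrow> (('a \<Rightarrow> 'a) \<times> 'a set) set set" where
  "NN X Sim f B = {pair_rel X Sim `` {(restrict f A, A)} | A. max_proper_subball X A B}"

lemma se_alt: "simple_expansion X Sim u v \<longleftrightarrow> is_vertex X Sim u \<and> is_vertex X Sim v \<and>
     (\<exists>c\<in>u. \<exists>f B. (f, B) \<in> c \<and> (\<exists>x\<in>B. \<exists>y\<in>B. x \<noteq> y) \<and> v = (u - {c}) \<union> NN X Sim f B)"
  unfolding simple_expansion_def NN_def by simp

definition sel :: "'b set \<Rightarrow> 'b" where "sel c = (SOME p. p \<in> c)"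

lemma sel_in: "x \<in> c \<Longrightarrow> sel c \<in> c"
  unfolding sel_def by (rule someI)

locale fsl =
  fixes X :: "'a::metric_space set" and Sim :: "'a set \<Rightarrow> 'a set \<Rightarrow> ('a \<Rightarrow> 'a) set"
  assumes fss: "finite_sim_structure X Sim"
begin

abbreviation "PS \<equiv> pairsS X Sim"
abbreviation "PR \<equiv> pair_rel X Sim"

lemma F1: "\<forall>B1 B2. \<not> (is_ball X B1 \<and> is_ball X B2) \<longrightarrow> Sim B1 B2 = {}"
  using fss unfolding finite_sim_structure_def by (elim conjE) assumption
lemma F2: "\<forall>B1 B2. finite (Sim B1 B2) \<and> (\<forall>f\<in>Sim B1 B2. similarity B1 B2 f)"
  using fss unfolding finite_sim_structure_def by (elim conjE) assumption
lemma F3: "\<forall>B. is_ball X B \<longrightarrow> restrict id B \<in> Sim B B"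
  using fss unfolding finite_sim_structure_def by (elim conjE) assumption
lemma F4: "\<forall>B1 B2 f. f \<in> Sim B1 B2 \<longrightarrow> restrict (inv_into B1 f) B2 \<in> Sim B2 B1"
  using fss unfolding finite_sim_structure_def by (elim conjE) assumption
lemma F5: "\<forall>B1 B2 B3 f g. f \<in> Sim B1 B2 \<longrightarrow> g \<in> Sim B2 B3 \<longrightarrow> compose B1 g f \<in> Sim B1 B3"
  using fss unfolding finite_sim_structure_def by (elim conjE) assumption
lemma F6: "\<forall>B1 B2 f A. f \<in> Sim B1 B2 \<longrightarrow> is_ball X A \<longrightarrow> A \<subseteq> B1 \<longrightarrow>
         restrict f A \<in> Sim A (f ` A)"
  using fss unfolding finite_sim_structure_def by (elim conjE) assumption

lemmas F = F1 F2 F3 F4 F5 F6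

lemma Sim_ball: "h \<in> Sim B1 B2 \<Longrightarrow> is_ball X B1 \<and> is_ball X B2"
  using F(1) by blast
lemma Sim_finite: "finite (Sim B1 B2)"
  using F(2) by blast
lemma Sim_sim: "h \<in> Sim B1 B2 \<Longrightarrow> similarity B1 B2 h"
  using F(2) by blast
lemma Sim_id: "is_ball X B \<Longrightarrow> restrict id B \<in> Sim B B"
  using F(3) by blast
lemma Sim_inv: "h \<in> Sim B1 B2 \<Longrightarrow> restrict (inv_into B1 h) B2 \<in> Sim B2 B1"
  using F(4) by blast
lemma Sim_comp: "h \<in> Sim B1 B2 \<Longrightarrow> g \<in> Sim B2 B3 \<Longrightarrow> compose B1 g h \<in> Sim B1 B3"
  using F(5) by blast
lemma Sim_restr: "h \<in> Sim B1 B2 \<Longrightarrow> is_ball X A \<Longrightarrow> A \<subseteq> B1 \<Longrightarrow> restrict h A \<in> Sim A (h ` A)"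
  using F(6) by blast

lemma sim_image: "h \<in> Sim B1 B2 \<Longrightarrow> h ` B1 = B2"
  using Sim_sim unfolding similarity_def by blast
lemma sim_ext: "h \<in> Sim B1 B2 \<Longrightarrow> h \<in> extensional B1"
  using Sim_sim unfolding similarity_def by blast
lemma sim_inj: "h \<in> Sim B1 B2 \<Longrightarrow> inj_on h B1"
proof -
  assume "h \<in> Sim B1 B2"
  then obtain l where l: "l > 0" "\<forall>x\<in>B1. \<forall>y\<in>B1. dist (h x) (h y) = l * dist x y"
    using Sim_sim unfolding similarity_def by blast
  show ?thesis unfolding inj_on_def
  proof (intro ballI impI)
    fix x y assume "x \<in> B1" "y \<in> B1" "h x = h y"
    then have "l * dist x y = 0" using l by force
    then show "x = y" using l by simp
  qed
qed
lemma sim_cont: "h \<in> Sim B1 B2 \<Longrightarrow> continuous_on B1 h"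
proof -
  assume "h \<in> Sim B1 B2"
  then obtain l where l: "l > 0" "\<forall>x\<in>B1. \<forall>y\<in>B1. dist (h x) (h y) = l * dist x y"
    using Sim_sim unfolding similarity_def by blast
  show ?thesis unfolding continuous_on_iff
  proof (intro ballI allI impI)
    fix x e assume x: "x \<in> B1" and e: "(0::real) < e"
    show "\<exists>d>0. \<forall>x'\<in>B1. dist x' x < d \<longrightarrow> dist (h x') (h x) < e"
    proof (intro exI[of _ "e / l"] conjI ballI impI)
      show "e / l > 0" using e l by simp
      fix x' assume "x' \<in> B1" "dist x' x < e / l"
      then have "l * dist x' x < e" using l by (simp add: field_simps)
      then show "dist (h x') (h x) < e" using l \<open>x' \<in> B1\<close> x by simp
    qed
  qed
qed

lemma ball_nonempty: "is_ball X A \<Longrightarrow> A \<noteq> {}"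
  unfolding is_ball_def by force
lemma ball_sub: "is_ball X A \<Longrightarrow> A \<subseteq> X"
  unfolding is_ball_def by force

lemma PS_D: "(f, B) \<in> PS \<Longrightarrow> is_ball X B \<and> inj_on f B \<and> f ` B \<subseteq> X \<and> f \<in> extensional B"
  unfolding pairsS_def embedding_into_def by blast

lemma PR_dom: "(p, q) \<in> PR \<Longrightarrow> p \<in> PS \<and> q \<in> PS"
  unfolding pair_rel_def by auto

lemma PR_I: "(f1, B1) \<in> PS \<Longrightarrow> (f2, B2) \<in> PS \<Longrightarrow> h \<in> Sim B1 B2 \<Longrightarrow>
   (\<And>x. x \<in> B1 \<Longrightarrow> f2 (h x) = f1 x) \<Longrightarrow> ((f1, B1), (f2, B2)) \<in> PR"
  unfolding pair_rel_def by blast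

lemma PR_E: "((f1, B1), (f2, B2)) \<in> PR \<Longrightarrow> \<exists>h\<in>Sim B1 B2. \<forall>x\<in>B1. f2 (h x) = f1 x"
  unfolding pair_rel_def by blast

lemma PR_refl: "p \<in> PS \<Longrightarrow> (p, p) \<in> PR"
proof -
  assume p: "p \<in> PS"
  obtain f B where pf: "p = (f, B)" by force
  have "is_ball X B" using p pf PS_D by blast
  then have "restrict id B \<in> Sim B B" by (rule Sim_id)
  then show ?thesis using p pf PR_I[of f B f B "restrict id B"] by simp
qed

lemma PR_sym: "(p, q) \<in> PR \<Longrightarrow> (q, p) \<in> PR"
proof -
  assume pq: "(p, q) \<in> PR"
  obtain f1 B1 f2 B2 where pf: "p = (f1, B1)" "q = (f2, B2)" by force
  from pq pf obtain h where h: "h \<in> Sim B1 B2" "\<forall>x\<in>B1. f2 (h x) = f1 x"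
    using PR_E by blast
  have hi: "restrict (inv_into B1 h) B2 \<in> Sim B2 B1" using h(1) by (rule Sim_inv)
  have "\<forall>y\<in>B2. f1 (restrict (inv_into B1 h) B2 y) = f2 y"
  proof
    fix y assume y: "y \<in> B2"
    then have y': "y \<in> h ` B1" using sim_image[OF h(1)] by simp
    then have "inv_into B1 h y \<in> B1" by (rule inv_into_into)
    then have "f1 (inv_into B1 h y) = f2 (h (inv_into B1 h y))" using h(2) by simp
    also have "\<dots> = f2 y" using y' f_inv_into_f by metis
    finally show "f1 (restrict (inv_into B1 h) B2 y) = f2 y" using y by simp
  qed
  then show ?thesis using pq pf hi PR_dom PR_I[of f2 B2 f1 B1] by metis
qed

lemma PR_trans: "(p, q) \<in> PR \<Longrightarrow> (q, r) \<in> PR \<Longrightarrow> (p, r) \<in> PR"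
proof -
  assume pq: "(p, q) \<in> PR" and qr: "(q, r) \<in> PR"
  obtain f1 B1 f2 B2 f3 B3 where pf: "p = (f1, B1)" "q = (f2, B2)" "r = (f3, B3)" by (metis prod.exhaust)
  from pq pf obtain h where h: "h \<in> Sim B1 B2" "\<forall>x\<in>B1. f2 (h x) = f1 x"
    using PR_E by blast
  from qr pf obtain g where g: "g \<in> Sim B2 B3" "\<forall>x\<in>B2. f3 (g x) = f2 x"
    using PR_E by blast
  have c: "compose B1 g h \<in> Sim B1 B3" using h(1) g(1) by (rule Sim_comp)
  have "\<forall>x\<in>B1. f3 (compose B1 g h x) = f1 x"
  proof
    fix x assume x: "x \<in> B1"
    then have "h x \<in> B2" using sim_image[OF h(1)] by blast
    then show "f3 (compose B1 g h x) = f1 x" using x g(2) h(2) by (simp add: compose_def)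
  qed
  then show ?thesis using pq qr pf c PR_dom PR_I[of f1 B1 f3 B3] by metis
qed

lemma equiv_PR: "equiv PS PR"
  unfolding equiv_def refl_on_def sym_def trans_def
proof (intro conjI allI impI ballI)
  show "PR \<subseteq> PS \<times> PS" using PR_dom by auto
qed (auto intro: PR_refl PR_sym PR_trans)

lemma cls_nonempty: "PR `` {p} \<noteq> {} \<Longrightarrow> p \<in> PS"
  using PR_dom by blast

lemma pc_mem: "c \<in> pair_classes X Sim \<Longrightarrow> q \<in> c \<Longrightarrow> q \<in> PS \<and> c = PR `` {q}"
proof -
  assume c: "c \<in> pair_classes X Sim" and q: "q \<in> c"
  from c obtain p where p: "p \<in> PS" "c = PR `` {p}"
    unfolding pair_classes_def quotient_def by blast
  then have "(p, q) \<in> PR" using q by blast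
  then show ?thesis using p equiv_class_eq[OF equiv_PR] PR_dom by metis
qed

lemma pc_nonempty: "c \<in> pair_classes X Sim \<Longrightarrow> c \<noteq> {}"
  unfolding pair_classes_def quotient_def using PR_refl by blast

lemma class_image_cls: "(f, B) \<in> PS \<Longrightarrow> class_image (PR `` {(f, B)}) = f ` B"
proof -
  assume p: "(f, B) \<in> PS"
  have *: "g ` D = f ` B" if "(g, D) \<in> PR `` {(f, B)}" for g D
  proof -
    from that obtain h where h: "h \<in> Sim B D" "\<forall>x\<in>B. g (h x) = f x"
      using PR_E by blast
    have "g ` D = g ` h ` B" using sim_image[OF h(1)] by simp
    also have "\<dots> = f ` B" using h(2) by (auto simp: image_iff)
    finally show ?thesis .
  qed
  have m: "(f, B) \<in> PR `` {(f, B)}" using PR_refl[OF p] by blast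
  show ?thesis unfolding class_image_def
  proof (rule antisym)
    show "(\<Union>(g, D)\<in>PR `` {(f, B)}. g ` D) \<subseteq> f ` B"
    proof (rule UN_least)
      fix q assume q: "q \<in> PR `` {(f, B)}"
      obtain g D where "q = (g, D)" by (cases q)
      then show "(case q of (g, D) \<Rightarrow> g ` D) \<subseteq> f ` B" using *[of g D] q by simp
    qed
    show "f ` B \<subseteq> (\<Union>(g, D)\<in>PR `` {(f, B)}. g ` D)"
      using UN_upper[OF m, of "\<lambda>(g, D). g ` D"] by simp
  qed
qed


lemma img_strict: "inj_on f S \<Longrightarrow> P \<subset> Q \<Longrightarrow> Q \<subseteq> S \<Longrightarrow> f ` P \<subset> f ` Q"
proof -
  assume i: "inj_on f S" and pq: "P \<subset> Q" and qs: "Q \<subseteq> S"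
  then obtain q where q: "q \<in> Q" "q \<notin> P" by blast
  have "f q \<notin> f ` P"
  proof
    assume "f q \<in> f ` P"
    then obtain p where "p \<in> P" "f q = f p" by (rule imageE)
    then have "p = q" using pq qs q inj_onD[OF i, of p q] by auto
    then show False using q \<open>p \<in> P\<close> by simp
  qed
  then show ?thesis using pq q by blast
qed

lemma transport:
  assumes gD: "(g, D) \<in> PS" and s: "s \<in> Sim A D" and ext: "\<phi> \<in> extensional A"
    and eq: "\<And>x. x \<in> A \<Longrightarrow> \<phi> x = g (s x)"
  shows "(\<phi>, A) \<in> PS \<and> ((\<phi>, A), (g, D)) \<in> PR"
proof -
  have A: "is_ball X A" using Sim_ball[OF s] by blast
  have sA: "s ` A = D" using sim_image[OF s] .
  have sinj: "inj_on s A" using sim_inj[OF s] .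
  from gD have gb: "is_ball X D" and ginj: "inj_on g D" and gX: "g ` D \<subseteq> X"
    and gc: "continuous_on D g" and gic: "continuous_on (g ` D) (inv_into D g)"
    and gld: "locally_determined X Sim D g"
    unfolding pairsS_def embedding_into_def by auto
  have phiA: "\<phi> ` A = g ` D"
  proof -
    have "\<phi> ` A = (g \<circ> s) ` A" by (rule image_cong) (simp_all add: eq)
    then show ?thesis using sA image_comp[of g s A] by simp
  qed
  have inj: "inj_on \<phi> A"
  proof -
    have "inj_on (g \<circ> s) A" using comp_inj_on[OF sinj] ginj sA by simp
    then show ?thesis using inj_on_cong[of A \<phi> "g \<circ> s"] eq by simp
  qed
  have cont: "continuous_on A \<phi>"
  proof -
    have "continuous_on A (g \<circ> s)"
      using continuous_on_compose[OF sim_cont[OF s]] gc sA by simp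
    then show ?thesis using continuous_on_cong[of A A \<phi> "g \<circ> s"] eq by simp
  qed
  have icont: "continuous_on (\<phi> ` A) (inv_into A \<phi>)"
  proof -
    have si: "restrict (inv_into A s) D \<in> Sim D A" using Sim_inv[OF s] .
    have c1: "continuous_on D (inv_into A s)"
      using sim_cont[OF si] continuous_on_cong[of D D "restrict (inv_into A s) D" "inv_into A s"]
      by simp
    have c2: "continuous_on (g ` D) (inv_into A s \<circ> inv_into D g)"
      using continuous_on_compose[OF gic] c1 inv_into_image_cancel[OF ginj subset_refl] by simp
    have e: "inv_into A \<phi> y = (inv_into A s \<circ> inv_into D g) y" if y: "y \<in> g ` D" for y
    proof -
      let ?z = "inv_into D g y"
      have z: "?z \<in> D" "g ?z = y" using y by (auto intro: inv_into_into f_inv_into_f)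
      let ?w = "inv_into A s ?z"
      have w: "?w \<in> A" "s ?w = ?z" using z(1) sA by (auto intro: inv_into_into f_inv_into_f)
      have "\<phi> ?w = y" using eq[OF w(1)] w(2) z(2) by simp
      then have "inv_into A \<phi> y = ?w" using inv_into_f_eq[OF inj w(1)] by simp
      then show ?thesis by simp
    qed
    show ?thesis using c2 continuous_on_cong[of "\<phi> ` A" "g ` D" "inv_into A \<phi>"] e phiA by simp
  qed
  have ld: "locally_determined X Sim A \<phi>"
    unfolding locally_determined_def
  proof
    fix x assume x: "x \<in> A"
    then have sx: "s x \<in> D" using sA by blast
    from gld sx obtain D' where D': "is_ball X D'" "D' \<subseteq> D" "s x \<in> D'" "is_ball X (g ` D')"
      "restrict g D' \<in> Sim D' (g ` D')" unfolding locally_determined_def by blast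
    define si where "si = restrict (inv_into A s) D"
    have si: "si \<in> Sim D A" unfolding si_def using Sim_inv[OF s] .
    have r1: "restrict si D' \<in> Sim D' (si ` D')" using Sim_restr[OF si D'(1,2)] .
    define A2 where "A2 = si ` D'"
    have A2b: "is_ball X A2" using Sim_ball[OF r1] unfolding A2_def by blast
    have A2s: "A2 \<subseteq> A" unfolding A2_def using sim_image[OF si] D'(2) by blast
    have sis: "s (si y) = y" if "y \<in> D" for y
      using that sA unfolding si_def by (auto intro: f_inv_into_f)
    have xA2: "x \<in> A2"
    proof -
      have "si (s x) = x" unfolding si_def using sx inv_into_f_f[OF sinj x] by simp
      then show ?thesis unfolding A2_def using D'(3) by (metis image_eqI)
    qed
    have sA2: "s ` A2 = D'"
    proof -
      have "s ` A2 = (\<lambda>y. s (si y)) ` D'" unfolding A2_def by (simp add: image_image)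
      also have "\<dots> = D'" using sis D'(2) by (auto simp: image_iff) (metis subsetD)
      finally show ?thesis .
    qed
    have r2: "restrict s A2 \<in> Sim A2 D'" using Sim_restr[OF s A2b A2s] sA2 by simp
    have cmp: "compose A2 (restrict g D') (restrict s A2) \<in> Sim A2 (g ` D')"
      using Sim_comp[OF r2 D'(5)] .
    have phiA2: "\<phi> ` A2 = g ` D'"
    proof -
      have "\<phi> ` A2 = (g \<circ> s) ` A2" by (rule image_cong) (use A2s eq in auto)
      then show ?thesis using sA2 image_comp[of g s A2] by simp
    qed
    have req: "restrict \<phi> A2 = compose A2 (restrict g D') (restrict s A2)"
    proof
      fix y show "restrict \<phi> A2 y = compose A2 (restrict g D') (restrict s A2) y"
      proof (cases "y \<in> A2")
        case True
        then have "s y \<in> D'" using sA2 by blast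
        then show ?thesis using True A2s eq by (auto simp: compose_def)
      qed (simp add: compose_def)
    qed
    show "\<exists>B'. is_ball X B' \<and> B' \<subseteq> A \<and> x \<in> B' \<and> is_ball X (\<phi> ` B') \<and>
        restrict \<phi> B' \<in> Sim B' (\<phi> ` B')"
      using A2b A2s xA2 phiA2 D'(4) req cmp by (intro exI[of _ A2]) simp
  qed
  have PSphi: "(\<phi>, A) \<in> PS"
    unfolding pairsS_def embedding_into_def
    using A ext inj phiA gX cont icont ld by simp
  have "((\<phi>, A), (g, D)) \<in> PR" using PR_I[OF PSphi gD s] eq by simp
  then show ?thesis using PSphi by simp
qed

lemma max_transport:
  assumes h: "h \<in> Sim B0 B" and A: "max_proper_subball X A B0"
  shows "max_proper_subball X (h ` A) B \<and> restrict h A \<in> Sim A (h ` A)"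
proof -
  have Ab: "is_ball X A" and AB: "A \<subset> B0"
    and Amax: "\<not> (\<exists>A'. is_ball X A' \<and> A \<subset> A' \<and> A' \<subset> B0)"
    using A unfolding max_proper_subball_def by auto
  have r: "restrict h A \<in> Sim A (h ` A)" using Sim_restr[OF h Ab] AB by blast
  have hAb: "is_ball X (h ` A)" using Sim_ball[OF r] by blast
  have hAB: "h ` A \<subset> B" using img_strict[OF sim_inj[OF h] AB] sim_image[OF h] by simp
  have "\<not> (\<exists>A'. is_ball X A' \<and> h ` A \<subset> A' \<and> A' \<subset> B)"
  proof
    assume "\<exists>A'. is_ball X A' \<and> h ` A \<subset> A' \<and> A' \<subset> B"
    then obtain A' where A': "is_ball X A'" "h ` A \<subset> A'" "A' \<subset> B" by blast
    define hi where "hi = restrict (inv_into B0 h) B"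
    have hi: "hi \<in> Sim B B0" unfolding hi_def using Sim_inv[OF h] .
    have r': "restrict hi A' \<in> Sim A' (hi ` A')" using Sim_restr[OF hi A'(1)] A'(3) by blast
    have b': "is_ball X (hi ` A')" using Sim_ball[OF r'] by blast
    have hih: "hi ` h ` A = A"
    proof -
      have "hi ` h ` A = inv_into B0 h ` h ` A"
        unfolding hi_def using AB sim_image[OF h] by (auto simp: image_iff)
      then show ?thesis using inv_into_image_cancel[OF sim_inj[OF h]] AB by auto
    qed
    have "hi ` h ` A \<subset> hi ` A'" using img_strict[OF sim_inj[OF hi] A'(2)] A'(3) by blast
    then have s1: "A \<subset> hi ` A'" using hih by simp
    have "hi ` A' \<subset> hi ` B" using img_strict[OF sim_inj[OF hi] A'(3)] by blast
    then have s2: "hi ` A' \<subset> B0" using sim_image[OF hi] by simp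
    show False using Amax b' s1 s2 by blast
  qed
  then show ?thesis using hAb hAB r unfolding max_proper_subball_def by blast
qed

lemma mps_D: "max_proper_subball X A B \<Longrightarrow> is_ball X A \<and> A \<subset> B"
  unfolding max_proper_subball_def by simp

lemma core:
  assumes h: "h \<in> Sim B0 B" and eq: "\<And>x. x \<in> B0 \<Longrightarrow> f (h x) = f0 x"
    and A: "max_proper_subball X A B0" and P: "(restrict f (h ` A), h ` A) \<in> PS"
  shows "(restrict f0 A, A) \<in> PS \<and> PR `` {(restrict f0 A, A)} = PR `` {(restrict f (h ` A), h ` A)}"
proof -
  have r: "restrict h A \<in> Sim A (h ` A)" using max_transport[OF h A] by blast
  have AB: "A \<subseteq> B0" using A unfolding max_proper_subball_def by blast
  have "(restrict f0 A, A) \<in> PS \<and> ((restrict f0 A, A), (restrict f (h ` A), h ` A)) \<in> PR"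
  proof (rule transport[OF P r])
    show "restrict f0 A \<in> extensional A" by simp
    fix x assume "x \<in> A"
    then show "restrict f0 A x = restrict f (h ` A) (restrict h A x)" using eq AB by auto
  qed
  then show ?thesis using equiv_class_eq[OF equiv_PR] by blast
qed

lemma se_facts:
  assumes u: "is_vertex X Sim u" and v: "is_vertex X Sim v" and c: "c \<in> u" and fB: "(f, B) \<in> c"
    and veq: "v = (u - {c}) \<union> NN X Sim f B"
  shows "(f, B) \<in> PS" "c = PR `` {(f, B)}"
    "\<And>A. max_proper_subball X A B \<Longrightarrow> (restrict f A, A) \<in> PS"
    "finite {A. max_proper_subball X A B}" "B = \<Union>{A. max_proper_subball X A B}"
    "card v > card u" "u = (v - NN X Sim f B) \<union> {c}" "NN X Sim f B \<subseteq> v"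
proof -
  let ?M = "{A. max_proper_subball X A B}"
  let ?cl = "\<lambda>A. PR `` {(restrict f A, A)}"
  have NNeq: "NN X Sim f B = ?cl ` ?M" unfolding NN_def by blast
  have upc: "u \<subseteq> pair_classes X Sim" and vpc: "v \<subseteq> pair_classes X Sim"
    and uf: "finite u" and vf: "finite v"
    using u v unfolding is_vertex_def by auto
  have udisj: "\<And>d e. d \<in> u \<Longrightarrow> e \<in> u \<Longrightarrow> d \<noteq> e \<Longrightarrow> class_image d \<inter> class_image e = {}"
    using u unfolding is_vertex_def by blast
  have vcov: "(\<Union>d\<in>v. class_image d) = X" using v unfolding is_vertex_def by blast
  have cpc: "c \<in> pair_classes X Sim" using upc c by blast
  show fBP: "(f, B) \<in> PS" and ceq: "c = PR `` {(f, B)}" using pc_mem[OF cpc fB] by auto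
  have fB': "is_ball X B" "inj_on f B" "f ` B \<subseteq> X" using PS_D[OF fBP] by auto
  have cim: "class_image c = f ` B" using ceq class_image_cls[OF fBP] by simp
  show NNv: "NN X Sim f B \<subseteq> v" using veq by blast
  show AP: "(restrict f A, A) \<in> PS" if A: "max_proper_subball X A B" for A
  proof -
    have "?cl A \<in> v" using NNv NNeq A by blast
    then have "?cl A \<noteq> {}" using vpc pc_nonempty by blast
    then show ?thesis by (rule cls_nonempty)
  qed
  have clim: "class_image (?cl A) = f ` A" if A: "max_proper_subball X A B" for A
    using class_image_cls[OF AP[OF A]] by simp
  have MsubB: "A \<subset> B" "A \<noteq> {}" if "max_proper_subball X A B" for A
    using mps_D[OF that] ball_nonempty by blast+
  have inj: "inj_on ?cl ?M"
  proof (rule inj_onI)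
    fix A1 A2 assume A1: "A1 \<in> ?M" and A2: "A2 \<in> ?M" and e: "?cl A1 = ?cl A2"
    then have "f ` A1 = f ` A2" using clim[of A1] clim[of A2] by simp
    then show "A1 = A2" using inj_on_image_eq_iff[OF fB'(2)] MsubB A1 A2 by blast
  qed
  have fNN: "finite (NN X Sim f B)" using NNv vf finite_subset by blast
  then have fi: "finite (?cl ` ?M)" unfolding NNeq .
  have Mfin: "finite ?M" using finite_imageD[OF fi inj] .
  then show "finite ?M" .
  have disj: "NN X Sim f B \<inter> (u - {c}) = {}"
  proof (rule ccontr)
    assume "NN X Sim f B \<inter> (u - {c}) \<noteq> {}"
    then obtain d where d0: "d \<in> NN X Sim f B" "d \<in> u" "d \<noteq> c" by blast
    from d0(1) obtain A where A: "A \<in> ?M" and dA: "d = ?cl A" unfolding NNeq by (rule imageE)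
    have "class_image d \<inter> class_image c = {}" using udisj[OF d0(2) c d0(3)] .
    then have "f ` A \<inter> f ` B = {}" using clim[of A] A dA cim by simp
    moreover have "A \<subseteq> B" "A \<noteq> {}" using MsubB[of A] A by auto
    ultimately show False by blast
  qed
  have cnotin: "c \<notin> NN X Sim f B"
  proof
    assume "c \<in> NN X Sim f B"
    then obtain A where A: "A \<in> ?M" and e: "c = ?cl A" unfolding NNeq by (rule imageE)
    then have "f ` A = f ` B" using clim[of A] cim by simp
    then have "A = B" using inj_on_image_eq_iff[OF fB'(2)] MsubB A by blast
    then show False using MsubB A by blast
  qed
  show cov: "B = \<Union>?M"
  proof
    show "\<Union>?M \<subseteq> B" using MsubB by blast
    show "B \<subseteq> \<Union>?M"
    proof
      fix z assume z: "z \<in> B"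
      then have "f z \<in> X" using fB' by blast
      then obtain d where d: "d \<in> v" "f z \<in> class_image d" using vcov by blast
      show "z \<in> \<Union>?M"
      proof (cases "d \<in> NN X Sim f B")
        case True
        then obtain A where A: "A \<in> ?M" "d = ?cl A" unfolding NNeq by (rule imageE)
        then have "f z \<in> f ` A" using d clim by simp
        then have "z \<in> A" using inj_on_image_mem_iff[OF fB'(2)] MsubB A z by blast
        then show ?thesis using A by blast
      next
        case False
        then have "d \<in> u" "d \<noteq> c" using d veq by auto
        then have "class_image d \<inter> class_image c = {}" using udisj c by blast
        then show ?thesis using d z cim by blast
      qed
    qed
  qed
  have two: "card ?M \<ge> 2"
  proof -
    obtain x where x: "x \<in> B" using ball_nonempty[OF fB'(1)] by blast
    then obtain A1 where A1: "A1 \<in> ?M" "x \<in> A1" using cov by blast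
    obtain z where z: "z \<in> B" "z \<notin> A1" using MsubB A1 by blast
    then obtain A2 where A2: "A2 \<in> ?M" "z \<in> A2" using cov by blast
    have "A1 \<noteq> A2" using A1 A2 z by blast
    then have "card {A1, A2} = 2" by simp
    moreover have "{A1, A2} \<subseteq> ?M" using A1 A2 by blast
    ultimately show ?thesis using card_mono[OF Mfin] by metis
  qed
  have cNN: "card (NN X Sim f B) \<ge> 2" using two card_image[OF inj] NNeq by simp
  have "card v = card (u - {c}) + card (NN X Sim f B)"
    using veq card_Un_disjoint[of "u - {c}" "NN X Sim f B"] disj uf fNN
    by (simp add: Int_commute)
  moreover have "card (u - {c}) = card u - 1" using c uf by simp
  moreover have "card u \<ge> 1" using c uf card_0_eq by fastforce
  ultimately show "card v > card u" using cNN by linarith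
  show "u = (v - NN X Sim f B) \<union> {c}" using veq disj c cnotin by blast
qed

lemma wd:
  assumes u: "is_vertex X Sim u" and v: "is_vertex X Sim v" and c: "c \<in> u" and fB: "(f, B) \<in> c"
    and veq: "v = (u - {c}) \<union> NN X Sim f B" and f0B0: "(f0, B0) \<in> c"
  shows "NN X Sim f B = NN X Sim f0 B0"
proof -
  note F = se_facts[OF u v c fB veq]
  have cpc: "c \<in> pair_classes X Sim" using u c unfolding is_vertex_def by blast
  have "c = PR `` {(f0, B0)}" using pc_mem[OF cpc f0B0] by blast
  then have "((f0, B0), (f, B)) \<in> PR" using fB by blast
  then obtain h where h: "h \<in> Sim B0 B" "\<forall>x\<in>B0. f (h x) = f0 x" using PR_E by blast
  define hi where "hi = restrict (inv_into B0 h) B"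
  have hi: "hi \<in> Sim B B0" unfolding hi_def using Sim_inv[OF h(1)] .
  have hhi: "h ` hi ` A' = A'" if "A' \<subseteq> B" for A'
  proof -
    have "h ` hi ` A' = (\<lambda>y. h (hi y)) ` A'" by (simp add: image_image)
    also have "\<dots> = (\<lambda>y. y) ` A'"
    proof (rule image_cong)
      fix y assume y: "y \<in> A'"
      then have "y \<in> h ` B0" using that sim_image[OF h(1)] by blast
      then show "h (hi y) = y" using y that unfolding hi_def by (simp add: f_inv_into_f subsetD)
    qed simp
    finally show ?thesis by simp
  qed
  show ?thesis
  proof
    show "NN X Sim f B \<subseteq> NN X Sim f0 B0"
    proof
      fix d assume "d \<in> NN X Sim f B"
      then obtain A' where A': "max_proper_subball X A' B" "d = PR `` {(restrict f A', A')}"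
        unfolding NN_def by blast
      have A'B: "A' \<subseteq> B" using A'(1) unfolding max_proper_subball_def by blast
      have A: "max_proper_subball X (hi ` A') B0" using max_transport[OF hi A'(1)] by blast
      have "PR `` {(restrict f0 (hi ` A'), hi ` A')} = PR `` {(restrict f (h ` hi ` A'), h ` hi ` A')}"
        using core[OF h(1) _ A] h(2) F(3)[OF A'(1)] hhi[OF A'B] by simp
      then have "d = PR `` {(restrict f0 (hi ` A'), hi ` A')}" using A'(2) hhi[OF A'B] by simp
      then show "d \<in> NN X Sim f0 B0" using A unfolding NN_def by blast
    qed
    show "NN X Sim f0 B0 \<subseteq> NN X Sim f B"
    proof
      fix d assume "d \<in> NN X Sim f0 B0"
      then obtain A where A: "max_proper_subball X A B0" "d = PR `` {(restrict f0 A, A)}"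
        unfolding NN_def by blast
      have A': "max_proper_subball X (h ` A) B" using max_transport[OF h(1) A(1)] by blast
      have "d = PR `` {(restrict f (h ` A), h ` A)}"
        using core[OF h(1) _ A(1)] h(2) F(3)[OF A'] A(2) by simp
      then show "d \<in> NN X Sim f B" using A' unfolding NN_def by blast
    qed
  qed
qed

lemma up_finite:
  assumes u: "is_vertex X Sim u"
  shows "finite {v. simple_expansion X Sim u v}"
proof -
  let ?sel = "\<lambda>c. SOME p. p \<in> c"
  let ?g = "\<lambda>c. (u - {c}) \<union> NN X Sim (fst (?sel c)) (snd (?sel c))"
  have "{v. simple_expansion X Sim u v} \<subseteq> ?g ` u"
  proof
    fix v assume "v \<in> {v. simple_expansion X Sim u v}"
    then have vv: "is_vertex X Sim v" and "\<exists>c\<in>u. \<exists>f B. (f, B) \<in> c \<and> v = (u - {c}) \<union> NN X Sim f B"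
      unfolding se_alt by blast+
    then obtain c f B where c: "c \<in> u" "(f, B) \<in> c" "v = (u - {c}) \<union> NN X Sim f B" by blast
    have "?sel c \<in> c" using c(2) by (rule someI)
    moreover obtain f0 B0 where p: "?sel c = (f0, B0)" by force
    ultimately have "(f0, B0) \<in> c" by simp
    then have "NN X Sim f B = NN X Sim f0 B0" using wd[OF u vv c] by blast
    then have "v = ?g c" using c(3) p by simp
    then show "v \<in> ?g ` u" using c(1) by blast
  qed
  moreover have "finite u" using u unfolding is_vertex_def by blast
  ultimately show ?thesis using finite_subset by blast
qed

lemma C_finite:
  assumes fmc: "finitely_many_ball_classes X Sim" and v: "is_vertex X Sim v" and Nv: "N \<subseteq> v"
  shows "finite {c. \<exists>u. is_vertex X Sim u \<and> c \<in> u \<and>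
            v = (u - {c}) \<union> NN X Sim (fst (sel c)) (snd (sel c)) \<and>
            N = NN X Sim (fst (sel c)) (snd (sel c))}" (is "finite ?C")
proof -
  define fc where "fc c = fst (sel c)" for c :: "(('a \<Rightarrow> 'a) \<times> 'a set) set"
  define Bc where "Bc c = snd (sel c)" for c :: "(('a \<Rightarrow> 'a) \<times> 'a set) set"
  define Q where "Q = {B. is_ball X B} // sim_equiv_rel X Sim"
  define rep where "rep q = (SOME R. R \<in> q)" for q :: "'a set set"
  define RR where "RR c = rep (sim_equiv_rel X Sim `` {Bc c})" for c
  define kk where "kk c = (SOME k. k \<in> Sim (RR c) (Bc c))" for c
  define \<Phi> where "\<Phi> c = (RR c, restrict (\<lambda>y. fc c (kk c y)) (RR c))" for c
  define MR where "MR R = {A. max_proper_subball X A R}" for R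
  define F where "F A = (\<Union>d\<in>N. (\<lambda>s. restrict (\<lambda>y. fst (sel d) (s y)) A) ` Sim A (snd (sel d)))" for A
  define PhiS where "PhiS R = {\<phi> \<in> extensional R. \<forall>A\<in>MR R. restrict \<phi> A \<in> F A}" for R
  define T where "T = Sigma {R \<in> rep ` Q. finite (MR R) \<and> R = \<Union>(MR R)} PhiS"
  have Qfin: "finite Q" using fmc unfolding Q_def finitely_many_ball_classes_def .
  have vpc: "v \<subseteq> pair_classes X Sim" using v unfolding is_vertex_def by blast
  have vfin: "finite v" using v unfolding is_vertex_def by blast
  have cf: "c \<in> pair_classes X Sim \<and> (fc c, Bc c) \<in> PS \<and> c = PR `` {(fc c, Bc c)} \<and>
      kk c \<in> Sim (RR c) (Bc c) \<and> RR c \<in> rep ` Q \<and>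
      (\<forall>A. max_proper_subball X A (Bc c) \<longrightarrow> (restrict (fc c) A, A) \<in> PS) \<and>
      finite (MR (Bc c)) \<and> Bc c = \<Union>(MR (Bc c)) \<and> N = NN X Sim (fc c) (Bc c)"
    if "c \<in> ?C" for c
  proof -
    from that obtain u where u: "is_vertex X Sim u" "c \<in> u"
      "v = (u - {c}) \<union> NN X Sim (fc c) (Bc c)" "N = NN X Sim (fc c) (Bc c)"
      unfolding fc_def Bc_def by blast
    have cpc: "c \<in> pair_classes X Sim" using u(1,2) unfolding is_vertex_def by blast
    have "c \<noteq> {}" using pc_nonempty[OF cpc] .
    then obtain x where "x \<in> c" by blast
    then have sc: "sel c \<in> c" by (rule sel_in)
    have fBc: "(fc c, Bc c) \<in> c" using sc unfolding fc_def Bc_def by simp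
    note SF = se_facts[OF u(1) v u(2) fBc u(3)]
    have Bb: "is_ball X (Bc c)" using PS_D[OF SF(1)] by blast
    let ?q = "sim_equiv_rel X Sim `` {Bc c}"
    have qQ: "?q \<in> Q" unfolding Q_def using Bb by (intro quotientI) simp
    have "(Bc c, Bc c) \<in> sim_equiv_rel X Sim"
      unfolding sim_equiv_rel_def using Bb Sim_id[OF Bb] by blast
    then have "Bc c \<in> ?q" by simp
    then have "rep ?q \<in> ?q" unfolding rep_def by (rule someI)
    then have "(Bc c, RR c) \<in> sim_equiv_rel X Sim" unfolding RR_def by simp
    then obtain k0 where "k0 \<in> Sim (Bc c) (RR c)" unfolding sim_equiv_rel_def by blast
    then have "restrict (inv_into (Bc c) k0) (RR c) \<in> Sim (RR c) (Bc c)" by (rule Sim_inv)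
    then have kk: "kk c \<in> Sim (RR c) (Bc c)" unfolding kk_def by (rule someI[where P="\<lambda>k. k \<in> Sim (RR c) (Bc c)"])
    have RQ: "RR c \<in> rep ` Q" unfolding RR_def using qQ by blast
    show ?thesis using cpc SF kk RQ u(4) unfolding MR_def by blast
  qed
  have inj: "inj_on \<Phi> ?C"
  proof (rule inj_onI)
    fix c c' assume c: "c \<in> ?C" and c': "c' \<in> ?C" and e: "\<Phi> c = \<Phi> c'"
    note A = cf[OF c] and A' = cf[OF c']
    have RP: "RR c = RR c' \<and> restrict (\<lambda>y. fc c (kk c y)) (RR c) = restrict (\<lambda>y. fc c' (kk c' y)) (RR c')"
      using e unfolding \<Phi>_def prod.inject .
    have R: "RR c = RR c'" using RP by (rule conjunct1)
    have ph: "restrict (\<lambda>y. fc c (kk c y)) (RR c) = restrict (\<lambda>y. fc c' (kk c' y)) (RR c')"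
      using RP by (rule conjunct2)
    let ?R = "RR c" and ?k = "kk c" and ?k' = "kk c'" and ?B = "Bc c" and ?B' = "Bc c'"
    have k: "?k \<in> Sim ?R ?B" and k': "?k' \<in> Sim ?R ?B'" using A A' R by auto
    define ki where "ki = restrict (inv_into ?R ?k) ?B"
    have ki: "ki \<in> Sim ?B ?R" unfolding ki_def using Sim_inv[OF k] .
    have h: "compose ?B ?k' ki \<in> Sim ?B ?B'" using Sim_comp[OF ki k'] .
    have eq: "fc c' (compose ?B ?k' ki y) = fc c y" if y: "y \<in> ?B" for y
    proof -
      have y': "y \<in> ?k ` ?R" using y sim_image[OF k] by simp
      have kiy: "ki y \<in> ?R" using y' inv_into_into unfolding ki_def using y by simp
      have kki: "?k (ki y) = y" unfolding ki_def using y y' f_inv_into_f by simp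
      have "fc c' (compose ?B ?k' ki y) = fc c' (?k' (ki y))" using y by (simp add: compose_def)
      also have "\<dots> = restrict (\<lambda>y. fc c' (kk c' y)) (RR c') (ki y)" using kiy R by simp
      also have "\<dots> = restrict (\<lambda>y. fc c (kk c y)) (RR c) (ki y)" using ph by simp
      also have "\<dots> = fc c y" using kiy kki by simp
      finally show ?thesis .
    qed
    have "((fc c, ?B), (fc c', ?B')) \<in> PR"
      by (rule PR_I[of "fc c" ?B "fc c'" ?B', OF _ _ h eq]) (use A A' in blast)+
    then have "PR `` {(fc c, ?B)} = PR `` {(fc c', ?B')}" using equiv_class_eq[OF equiv_PR] by blast
    then show "c = c'" using A A' by metis
  qed
  have sub: "\<Phi> ` ?C \<subseteq> T"
  proof
    fix z assume "z \<in> \<Phi> ` ?C"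
    then obtain c where c: "c \<in> ?C" and z: "z = \<Phi> c" by blast
    note A = cf[OF c]
    let ?R = "RR c" and ?k = "kk c" and ?B = "Bc c" and ?f = "fc c"
    let ?\<phi> = "restrict (\<lambda>y. ?f (?k y)) ?R"
    have k: "?k \<in> Sim ?R ?B" using A by blast
    define ki where "ki = restrict (inv_into ?R ?k) ?B"
    have ki: "ki \<in> Sim ?B ?R" unfolding ki_def using Sim_inv[OF k] .
    have kinj: "inj_on ?k ?R" using sim_inj[OF k] .
    have MRt: "?k ` A \<in> MR ?B" if "A \<in> MR ?R" for A
      using max_transport[OF k] that unfolding MR_def by blast
    have MRsub: "A \<subseteq> ?R" if "A \<in> MR ?R" for A
      using that mps_D unfolding MR_def by blast
    have finMR: "finite (MR ?R)"
    proof -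
      have "inj_on (\<lambda>A. ?k ` A) (MR ?R)"
        by (rule inj_onI) (use inj_on_image_eq_iff[OF kinj] MRsub in blast)
      moreover have "(\<lambda>A. ?k ` A) ` MR ?R \<subseteq> MR ?B" using MRt by blast
      ultimately show ?thesis using A finite_subset finite_imageD by metis
    qed
    have covR: "?R = \<Union>(MR ?R)"
    proof
      show "\<Union>(MR ?R) \<subseteq> ?R" using MRsub by blast
      show "?R \<subseteq> \<Union>(MR ?R)"
      proof
        fix y assume y: "y \<in> ?R"
        then have "?k y \<in> ?B" using sim_image[OF k] by blast
        then obtain A' where A': "A' \<in> MR ?B" "?k y \<in> A'" using A by blast
        have "ki ` A' \<in> MR ?R" using max_transport[OF ki] A'(1) unfolding MR_def by blast
        moreover have "ki (?k y) = y" unfolding ki_def using y \<open>?k y \<in> ?B\<close> inv_into_f_f[OF kinj y] by simp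
        ultimately show "y \<in> \<Union>(MR ?R)" using A'(2) by (metis UnionI image_eqI)
      qed
    qed
    have phS: "?\<phi> \<in> PhiS ?R"
      unfolding PhiS_def
    proof (intro CollectI conjI ballI)
      show "?\<phi> \<in> extensional ?R" by simp
      fix A assume AM: "A \<in> MR ?R"
      let ?A' = "?k ` A"
      have A'M: "max_proper_subball X ?A' ?B" and rk: "restrict ?k A \<in> Sim A ?A'"
        using max_transport[OF k] AM unfolding MR_def by blast+
      define d where "d = PR `` {(restrict ?f ?A', ?A')}"
      have dN: "d \<in> N" using A A'M unfolding d_def NN_def by blast
      have P: "(restrict ?f ?A', ?A') \<in> PS" using A A'M by blast
      have "(restrict ?f ?A', ?A') \<in> d" unfolding d_def using PR_refl[OF P] by blast
      then have sd: "sel d \<in> d" by (rule sel_in)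
      obtain g D where gD: "sel d = (g, D)" by force
      have "((restrict ?f ?A', ?A'), (g, D)) \<in> PR" using sd gD unfolding d_def by simp
      then obtain h where h: "h \<in> Sim ?A' D" "\<forall>x\<in>?A'. g (h x) = restrict ?f ?A' x"
        using PR_E by blast
      have s: "compose A h (restrict ?k A) \<in> Sim A D" using Sim_comp[OF rk h(1)] .
      have "restrict ?\<phi> A = restrict (\<lambda>y. g (compose A h (restrict ?k A) y)) A"
      proof
        fix y show "restrict ?\<phi> A y = restrict (\<lambda>y. g (compose A h (restrict ?k A) y)) A y"
        proof (cases "y \<in> A")
          case True
          then have "?k y \<in> ?A'" by blast
          then show ?thesis using True h(2) MRsub[OF AM] by (auto simp: compose_def)
        qed simp
      qed
      then show "restrict ?\<phi> A \<in> F A" unfolding F_def using dN s gD by force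
    qed
    have "?R \<in> rep ` Q" using A by blast
    then show "z \<in> T" unfolding T_def z \<Phi>_def using finMR covR phS by blast
  qed
  have Tfin: "finite T"
    unfolding T_def
  proof (rule finite_SigmaI)
    show "finite {R \<in> rep ` Q. finite (MR R) \<and> R = \<Union>(MR R)}" using Qfin by simp
    fix R assume "R \<in> {R \<in> rep ` Q. finite (MR R) \<and> R = \<Union>(MR R)}"
    then have "R \<in> rep ` Q \<and> (finite (MR R) \<and> R = \<Union>(MR R))" by (rule CollectD)
    then have fMc: "finite (MR R) \<and> R = \<Union>(MR R)" by (rule conjunct2)
    have fM: "finite (MR R)" using fMc by (rule conjunct1)
    have cov: "R = \<Union>(MR R)" using fMc by (rule conjunct2)
    let ?\<psi> = "\<lambda>\<phi>. restrict (\<lambda>A. restrict \<phi> A) (MR R)"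
    have Ffin: "finite (F A)" for A
    proof -
      have "finite N" using Nv vfin by (rule finite_subset)
      then show ?thesis unfolding F_def by (intro finite_UN_I finite_imageI Sim_finite)
    qed
    have "?\<psi> ` PhiS R \<subseteq> PiE (MR R) F" unfolding PhiS_def by auto
    moreover have "finite (PiE (MR R) F)" using fM Ffin by (simp add: finite_PiE)
    moreover have "inj_on ?\<psi> (PhiS R)"
    proof (rule inj_onI)
      fix \<phi>1 \<phi>2 assume p1: "\<phi>1 \<in> PhiS R" and p2: "\<phi>2 \<in> PhiS R" and e: "?\<psi> \<phi>1 = ?\<psi> \<phi>2"
      show "\<phi>1 = \<phi>2"
      proof (rule extensionalityI)
        show "\<phi>1 \<in> extensional R" "\<phi>2 \<in> extensional R" using p1 p2 unfolding PhiS_def by auto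
        fix x assume "x \<in> R"
        then obtain A where A: "A \<in> MR R" "x \<in> A" using cov by blast
        have "?\<psi> \<phi>1 A = ?\<psi> \<phi>2 A" using e by simp
        then have "restrict \<phi>1 A x = restrict \<phi>2 A x" using A(1) by simp
        then show "\<phi>1 x = \<phi>2 x" using A(2) by simp
      qed
    qed
    ultimately show "finite (PhiS R)" using finite_subset finite_imageD by metis
  qed
  show ?thesis using finite_imageD[OF finite_subset[OF sub Tfin] inj] .
qed

lemma down_finite:
  assumes fmc: "finitely_many_ball_classes X Sim" and v: "is_vertex X Sim v"
  shows "finite {u. simple_expansion X Sim u v}"
proof -
  let ?C = "\<lambda>N. {c. \<exists>u. is_vertex X Sim u \<and> c \<in> u \<and>
            v = (u - {c}) \<union> NN X Sim (fst (sel c)) (snd (sel c)) \<and>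
            N = NN X Sim (fst (sel c)) (snd (sel c))}"
  have "{u. simple_expansion X Sim u v} \<subseteq> (\<lambda>(N, c). (v - N) \<union> {c}) ` (SIGMA N:Pow v. ?C N)"
  proof
    fix u assume "u \<in> {u. simple_expansion X Sim u v}"
    then have uv: "is_vertex X Sim u" and "\<exists>c\<in>u. \<exists>f B. (f, B) \<in> c \<and> v = (u - {c}) \<union> NN X Sim f B"
      unfolding se_alt by blast+
    then obtain c f B where c: "c \<in> u" "(f, B) \<in> c" "v = (u - {c}) \<union> NN X Sim f B" by blast
    have sc: "sel c \<in> c" using c(2) by (rule sel_in)
    then have sc': "(fst (sel c), snd (sel c)) \<in> c" by simp
    let ?N = "NN X Sim (fst (sel c)) (snd (sel c))"
    have "NN X Sim f B = ?N" using wd[OF uv v c sc'] .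
    then have veq: "v = (u - {c}) \<union> ?N" using c(3) by simp
    note SF = se_facts[OF uv v c(1) sc' veq]
    have "c \<in> ?C ?N" using uv c(1) veq by blast
    moreover have "?N \<in> Pow v" using SF by blast
    ultimately have "(?N, c) \<in> (SIGMA N:Pow v. ?C N)" by blast
    moreover have "u = (\<lambda>(N, c). (v - N) \<union> {c}) (?N, c)" using SF by simp
    ultimately show "u \<in> (\<lambda>(N, c). (v - N) \<union> {c}) ` (SIGMA N:Pow v. ?C N)" by blast
  qed
  moreover have "finite (SIGMA N:Pow v. ?C N)"
  proof (rule finite_SigmaI)
    show "finite (Pow v)" using v unfolding is_vertex_def by simp
    fix N assume "N \<in> Pow v"
    then show "finite (?C N)" using C_finite[OF fmc v] by blast
  qed
  ultimately show ?thesis using finite_subset by blast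
qed

lemma se_vertex: "simple_expansion X Sim u v \<Longrightarrow> is_vertex X Sim u \<and> is_vertex X Sim v"
  unfolding simple_expansion_def by blast

lemma se_card: "simple_expansion X Sim u v \<Longrightarrow> card u < card v"
proof -
  assume "simple_expansion X Sim u v"
  then have uv: "is_vertex X Sim u" "is_vertex X Sim v" and
    "\<exists>c\<in>u. \<exists>f B. (f, B) \<in> c \<and> v = (u - {c}) \<union> NN X Sim f B"
    unfolding se_alt by blast+
  then obtain c f B where c: "c \<in> u" "(f, B) \<in> c" "v = (u - {c}) \<union> NN X Sim f B" by blast
  show ?thesis using se_facts[OF uv c] by blast
qed

lemma pow_card: "(simple_expansion X Sim ^^ k) a b \<Longrightarrow> card a + k \<le> card b"
proof (induction k arbitrary: b)
  case 0 then show ?case by simp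
next
  case (Suc k)
  then obtain y where "(simple_expansion X Sim ^^ k) a y" "simple_expansion X Sim y b"
    by (blast elim: relpowp_Suc_E)
  then show ?case using Suc.IH se_card by fastforce
qed

lemma pow_vertex: "(simple_expansion X Sim ^^ k) a b \<Longrightarrow> is_vertex X Sim a = is_vertex X Sim b"
proof (induction k arbitrary: b)
  case 0 then show ?case by simp
next
  case (Suc k)
  then obtain y where "(simple_expansion X Sim ^^ k) a y" "simple_expansion X Sim y b"
    by (blast elim: relpowp_Suc_E)
  then show ?case using Suc.IH se_vertex by blast
qed

lemma up_pow_finite: "is_vertex X Sim v \<Longrightarrow> finite {w. (simple_expansion X Sim ^^ k) v w}"
proof (induction k)
  case 0 then show ?case by simp
next
  case (Suc k)
  have "{w. (simple_expansion X Sim ^^ Suc k) v w} \<subseteq>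
      (\<Union>y\<in>{w. (simple_expansion X Sim ^^ k) v w}. {w. simple_expansion X Sim y w})"
    by (blast elim: relpowp_Suc_E)
  moreover have "finite (\<Union>y\<in>{w. (simple_expansion X Sim ^^ k) v w}. {w. simple_expansion X Sim y w})"
  proof (rule finite_UN_I)
    show "finite {w. (simple_expansion X Sim ^^ k) v w}" using Suc by blast
    fix y assume "y \<in> {w. (simple_expansion X Sim ^^ k) v w}"
    then have "is_vertex X Sim y" using pow_vertex Suc.prems by blast
    then show "finite {w. simple_expansion X Sim y w}" by (rule up_finite)
  qed
  ultimately show ?case using finite_subset by blast
qed

lemma down_pow_finite: "finitely_many_ball_classes X Sim \<Longrightarrow> is_vertex X Sim v \<Longrightarrow>
    finite {w. (simple_expansion X Sim ^^ k) w v}"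
proof (induction k)
  case 0 then show ?case by simp
next
  case (Suc k)
  have "{w. (simple_expansion X Sim ^^ Suc k) w v} \<subseteq>
      (\<Union>y\<in>{w. (simple_expansion X Sim ^^ k) w v}. {w. simple_expansion X Sim w y})"
    by (blast elim: relpowp_Suc_E2)
  moreover have "finite (\<Union>y\<in>{w. (simple_expansion X Sim ^^ k) w v}. {w. simple_expansion X Sim w y})"
  proof (rule finite_UN_I)
    show "finite {w. (simple_expansion X Sim ^^ k) w v}" using Suc by blast
    fix y assume "y \<in> {w. (simple_expansion X Sim ^^ k) w v}"
    then have "is_vertex X Sim y" using pow_vertex Suc.prems by blast
    then show "finite {w. simple_expansion X Sim w y}" using down_finite Suc.prems by blast
  qed
  ultimately show ?case using finite_subset by blast
qed
end
theorem proposition4p6: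
  fixes X :: "'a::metric_space set"
    and Sim :: "'a set \<Rightarrow> 'a set \<Rightarrow> ('a \<Rightarrow> 'a) set"
    and n :: nat
  assumes "X \<noteq> {}" and "compact X" and "ultrametric X"
    and "finite_sim_structure X Sim"
    and "finitely_many_ball_classes X Sim"
  shows "K_le_locally_finite X Sim n"
proof -
  interpret fsl X Sim by unfold_locales (rule assms(4))
  show ?thesis unfolding K_le_locally_finite_def
  proof (intro allI impI)
    fix v assume v: "is_vertex X Sim v \<and> card v \<le> n"
    let ?se = "simple_expansion X Sim"
    define W where "W = (\<Union>k\<le>n. {w. (?se ^^ k) v w}) \<union> (\<Union>k\<le>n. {w. (?se ^^ k) w v})"
    have Wfin: "finite W" unfolding W_def
      using up_pow_finite down_pow_finite assms(5) v by auto
    have "{\<sigma> \<in> simplices_le X Sim n. v \<in> \<sigma>} \<subseteq> Pow W"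
    proof
      fix \<sigma> assume "\<sigma> \<in> {\<sigma> \<in> simplices_le X Sim n. v \<in> \<sigma>}"
      then have s: "\<forall>w\<in>\<sigma>. card w \<le> n \<and> (vertex_le X Sim v w \<or> vertex_le X Sim w v)"
        unfolding simplices_le_def by blast
      show "\<sigma> \<in> Pow W"
      proof (rule PowI, rule subsetI)
        fix w assume "w \<in> \<sigma>"
        then have cw: "card w \<le> n" and vw: "vertex_le X Sim v w \<or> vertex_le X Sim w v" using s by auto
        show "w \<in> W"
        proof (cases "vertex_le X Sim v w")
          case True
          then obtain k where k: "(?se ^^ k) v w" unfolding vertex_le_def rtranclp_power by blast
          then have "k \<le> n" using pow_card[OF k] cw by linarith
          then show ?thesis unfolding W_def using k by blast
        next
          case False
          then have "vertex_le X Sim w v" using vw by blast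
          then obtain k where k: "(?se ^^ k) w v" unfolding vertex_le_def rtranclp_power by blast
          then have "k \<le> n" using pow_card[OF k] v by linarith
          then show ?thesis unfolding W_def using k by blast
        qed
      qed
    qed
    then show "finite {\<sigma> \<in> simplices_le X Sim n. v \<in> \<sigma>}" using Wfin finite_subset by blast
  qed
qed

end
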